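(* Let $\mathcal G=(\mathcal V,\mathcal E,w)$ be a finite, undirected, connected graph with $n$ vertices and positive edge weights, and let $L$ be its Laplacian matrix. Let $w^*>0$ be a real number that is the weight of at least one $(m,k)$-star of $\mathcal G$. Let $\mathcal S_{w^*}$ be the set of all $(m,k)$-stars of $\mathcal G$ (as $m,k$ range over the positive integers with $m+k\le n$) whose weight is defined and equals $w^*$, and let $\deg(\mathcal S_{w^*})=\sum_{S_{m,k}\in\mathcal S_{w^*}}(m-1)$. Then $w^*$ is an eigenvalue of $L$ and its algebraic multiplicity as an eigenvalue of $L$ is at least $\deg(\mathcal S_{w^*})$.
   Context: Weighted adjacency matrix: $A_{ij}=w(i,j)$ if $\{i,j\}\in\mathcal E$ and $A_{ij}=0$ otherwise (no loops). The strength of a vertex $i$ is $s(i)=\sum_j A_{ij}$. The Laplacian is $L=D-A$ with $D=\mathrm{diag}(s(1),\dots,s(n))$. An $(m,k)$-star of $\mathcal G$, denoted $S_{m,k}$, is a pair $(\mathcal V_1,\mathcal V_2)$ of disjoint vertex sets with $|\mathcal V_1|=m\ge 2$, $|\mathcal V_2|=k$, such that every vertex of $\mathcal V_1$ is adjacent to every vertex of $\mathcal V_2$ and to no vertex outside $\mathcal V_2$ (so $\mathcal V_1$ is independent); the sets are uniquely determined, i.e. $\mathcal V_1$ is the set of all vertices of $\mathcal G$ whose neighbourhood is exactly $\mathcal V_2$ (so distinct $(m,k)$-stars have disjoint sets $\mathcal V_1$). Its degree is $m-1$. Its weight is defined only when $w(i,j)=w(i',j)$ for all $i,i'\in\mathcal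 V_1$ and all $j\in\mathcal V_2$, and then equals $\sum_{j\in\mathcal V_2}w(i,j)$ for any $i\in\mathcal V_1$. *)

theory Defs
  imports "Jordan_Normal_Form.Char_Poly"
begin

text \<open>Vertices are 0..<n. E is the (symmetric, irreflexive) edge relation, w the weight
  function (only its values on edges matter).\<close>

definition adj_mat :: "nat \<Rightarrow> (nat \<Rightarrow> nat \<Rightarrow> bool) \<Rightarrow> (nat \<Rightarrow> nat \<Rightarrow> real) \<Rightarrow> nat \<Rightarrow> nat \<Rightarrow> real" where
  "adj_mat n E w i j = (if E i j then w i j else 0)"

definition strength :: "nat \<Rightarrow> (nat \<Rightarrow> nat \<Rightarrow> bool) \<Rightarrow> (nat \<Rightarrow> nat \<Rightarrow> real) \<Rightarrow> nat \<Rightarrow> real" where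
  "strength n E w i = (\<Sum>j<n. adj_mat n E w i j)"

definition laplacian :: "nat \<Rightarrow> (nat \<Rightarrow> nat \<Rightarrow> bool) \<Rightarrow> (nat \<Rightarrow> nat \<Rightarrow> real) \<Rightarrow> real mat" where
  "laplacian n E w = mat n n (\<lambda>(i,j). (if i = j then strength n E w i else 0) - adj_mat n E w i j)"

definition nbhd :: "nat \<Rightarrow> (nat \<Rightarrow> nat \<Rightarrow> bool) \<Rightarrow> nat \<Rightarrow> nat set" where
  "nbhd n E i = {j. j < n \<and> E i j}"

text \<open>(V1,V2) is an (m,k)-star with m = card V1, k = card V2 (m \<ge> 2, k \<ge> 1).\<close>
definition is_star :: "nat \<Rightarrow> (nat \<Rightarrow> nat \<Rightarrow> bool) \<Rightarrow> nat set \<Rightarrow> nat set \<Rightarrow> bool" where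
  "is_star n E V1 V2 \<longleftrightarrow>
     V1 \<subseteq> {..<n} \<and> V2 \<subseteq> {..<n} \<and> V1 \<inter> V2 = {} \<and>
     card V1 \<ge> 2 \<and> card V2 \<ge> 1 \<and>
     (\<forall>i\<in>V1. \<forall>j\<in>V2. E i j) \<and>
     (\<forall>i\<in>V1. \<forall>j<n. E i j \<longrightarrow> j \<in> V2) \<and>
     V1 = {i. i < n \<and> nbhd n E i = V2}"

definition star_weight_defined :: "(nat \<Rightarrow> nat \<Rightarrow> real) \<Rightarrow> nat set \<Rightarrow> nat set \<Rightarrow> bool" where
  "star_weight_defined w V1 V2 \<longleftrightarrow> (\<forall>i\<in>V1. \<forall>i'\<in>V1. \<forall>j\<in>V2. w i j = w i' j)"

definition star_weight :: "(nat \<Rightarrow> nat \<Rightarrow> real) \<Rightarrow> nat set \<Rightarrow> nat set \<Rightarrow> real" where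
  "star_weight w V1 V2 = (\<Sum>j\<in>V2. w (SOME i. i \<in> V1) j)"

definition stars_of_weight :: "nat \<Rightarrow> (nat \<Rightarrow> nat \<Rightarrow> bool) \<Rightarrow> (nat \<Rightarrow> nat \<Rightarrow> real) \<Rightarrow> real \<Rightarrow> (nat set \<times> nat set) set" where
  "stars_of_weight n E w c = {(V1, V2). is_star n E V1 V2 \<and> star_weight_defined w V1 V2 \<and> star_weight w V1 V2 = c}"

definition stars_degree :: "nat \<Rightarrow> (nat \<Rightarrow> nat \<Rightarrow> bool) \<Rightarrow> (nat \<Rightarrow> nat \<Rightarrow> real) \<Rightarrow> real \<Rightarrow> nat" where
  "stars_degree n E w c = (\<Sum>(V1, V2)\<in>stars_of_weight n E w c. card V1 - 1)"

end

theory Submission imports Defs begin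

lemma key_dvd:
  fixes A :: "real mat" and c :: real
  assumes A: "A \<in> carrier_mat n n" and D: "D \<subseteq> {..<n}"
    and piv: "\<And>k. k \<in> D \<Longrightarrow> piv k < k"
    and eig: "\<And>k r. k \<in> D \<Longrightarrow> r < n \<Longrightarrow>
       A $$ (r,k) - A $$ (r, piv k) = c * ((if r = k then 1 else 0) - (if r = piv k then 1 else 0))"
  shows "[:-c,1:] ^ card D dvd char_poly A"
proof -
  define C where "C = char_poly_matrix A"
  have Cc: "C \<in> carrier_mat n n" unfolding C_def using A by simp
  have Cij: "C $$ (i,j) = (if i = j then [:0,1:] else 0) + [: - A $$ (i,j) :]" if "i < n" "j < n" for i j
    unfolding C_def char_poly_matrix_def using A that by auto
  define P :: "real poly mat" where "P = mat n n (\<lambda>(i,j). (if i = j then 1 else 0) + (if j \<in> D \<and> i = piv j then -1 else 0))"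
  define q :: "real poly" where "q = [:-c,1:]"
  define C2 where "C2 = mat n n (\<lambda>(i,j). if j \<in> D then (if i = j then 1 else 0) - (if i = piv j then 1 else 0) else C $$ (i,j))"
  define Dg :: "real poly mat" where "Dg = mat n n (\<lambda>(i,j). if i = j then (if i \<in> D then q else 1) else 0)"
  have Pc: "P \<in> carrier_mat n n" and C2c: "C2 \<in> carrier_mat n n" and Dgc: "Dg \<in> carrier_mat n n"
    unfolding P_def C2_def Dg_def by auto
  have detP: "det P = 1"
  proof -
    have ut: "upper_triangular P" unfolding P_def upper_triangular_def using piv by fastforce
    have "diag_mat P = map (\<lambda>i. 1) [0..<n]" unfolding P_def diag_mat_def using piv
      by (auto intro!: map_cong) (metis less_irrefl)
    then show ?thesis using det_upper_triangular[OF ut Pc] by (simp add: prod.distinct_set_conv_list[symmetric])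
  qed
  have detDg: "det Dg = q ^ card D"
  proof -
    have ut: "upper_triangular Dg" unfolding Dg_def upper_triangular_def by auto
    have "diag_mat Dg = map (\<lambda>i. if i \<in> D then q else 1) [0..<n]" unfolding Dg_def diag_mat_def
      by (auto intro!: map_cong)
    then have "det Dg = (\<Prod>i\<in>{0..<n}. if i \<in> D then q else 1)"
      using det_upper_triangular[OF ut Dgc] by (simp add: prod.distinct_set_conv_list[symmetric])
    also have "\<dots> = q ^ card D"
    proof -
      have "{0..<n} \<inter> D = D" using D by auto
      then show ?thesis by (simp add: prod.If_cases)
    qed
    finally show ?thesis .
  qed
  have eq: "C * P = C2 * Dg"
  proof (rule eq_matI)
    fix i j assume i: "i < dim_row (C2 * Dg)" and j: "j < dim_col (C2 * Dg)"
    then have i: "i < n" and j: "j < n" using C2c Dgc by auto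
    have "(C * P) $$ (i,j) = (\<Sum>k<n. C $$ (i,k) * P $$ (k,j))"
      using i j Cc Pc by (simp add: scalar_prod_def lessThan_atLeast0)
    also have "\<dots> = (\<Sum>k<n. (if k = j then C $$ (i,j) else 0) + (if j \<in> D then (if k = piv j then - C $$ (i,piv j) else 0) else 0))"
      by (rule sum.cong, auto simp: P_def j distrib_left)
    also have "\<dots> = C $$ (i,j) - (if j \<in> D then C $$ (i, piv j) else 0)"
      using j piv[of j] by (cases "j \<in> D") (simp_all add: sum.distrib)
    finally have l: "(C * P) $$ (i,j) = C $$ (i,j) - (if j \<in> D then C $$ (i, piv j) else 0)" .
    have "(C2 * Dg) $$ (i,j) = (\<Sum>k<n. C2 $$ (i,k) * Dg $$ (k,j))"
      using i j C2c Dgc by (simp add: scalar_prod_def lessThan_atLeast0)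
    also have "\<dots> = (\<Sum>k<n. if k = j then C2 $$ (i,j) * (if j \<in> D then q else 1) else 0)"
      by (rule sum.cong, auto simp: Dg_def j)
    also have "\<dots> = C2 $$ (i,j) * (if j \<in> D then q else 1)" using j by simp
    finally have r: "(C2 * Dg) $$ (i,j) = C2 $$ (i,j) * (if j \<in> D then q else 1)" .
    show "(C * P) $$ (i,j) = (C2 * Dg) $$ (i,j)"
    proof (cases "j \<in> D")
      case False then show ?thesis using l r i j by (simp add: C2_def)
    next
      case True
      have pj: "piv j < n" "piv j \<noteq> j" using piv[OF True] j by auto
      have e: "A $$ (i,j) - A $$ (i, piv j) = c * ((if i = j then 1 else 0) - (if i = piv j then 1 else 0))"
        using eig[OF True i] .
      have "C $$ (i,j) - C $$ (i, piv j) = ((if i = j then 1 else 0) - (if i = piv j then 1 else 0)) * q"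
        using e pj i j unfolding Cij[OF i j] Cij[OF i pj(1)] q_def
        by (cases "i = j"; cases "i = piv j"; auto simp: algebra_simps)
      then show ?thesis using l r i j True by (simp add: C2_def)
    qed
  qed (use Cc Pc C2c Dgc in auto)
  have "char_poly A = det C" unfolding char_poly_def C_def ..
  also have "\<dots> = det (C * P)" using det_mult[OF Cc Pc] detP by simp
  also have "\<dots> = det C2 * q ^ card D" using eq det_mult[OF C2c Dgc] detDg by simp
  finally show ?thesis unfolding q_def by simp
qed

lemma star_V1: "is_star n E V1 V2 \<Longrightarrow> V1 = {i. i < n \<and> nbhd n E i = V2}"
  unfolding is_star_def by (elim conjE) assumption

lemma star_E: "is_star n E V1 V2 \<Longrightarrow> i \<in> V1 \<Longrightarrow> j \<in> V2 \<Longrightarrow> E i j"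
  unfolding is_star_def by (elim conjE) blast

lemma star_E2: "is_star n E V1 V2 \<Longrightarrow> i \<in> V1 \<Longrightarrow> j < n \<Longrightarrow> E i j \<Longrightarrow> j \<in> V2"
  unfolding is_star_def by (elim conjE) blast

lemma star_sub: "is_star n E V1 V2 \<Longrightarrow> V1 \<subseteq> {..<n} \<and> V2 \<subseteq> {..<n} \<and> card V1 \<ge> 2"
  unfolding is_star_def by (elim conjE) simp

theorem theorem1:
  fixes n :: nat and E :: "nat \<Rightarrow> nat \<Rightarrow> bool" and w :: "nat \<Rightarrow> nat \<Rightarrow> real" and c :: real
  assumes verts: "\<And>i j. E i j \<Longrightarrow> i < n \<and> j < n"
    and sym: "\<And>i j. E i j \<Longrightarrow> E j i"
    and irrefl: "\<And>i. \<not> E i i"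
    and wsym: "\<And>i j. E i j \<Longrightarrow> w i j = w j i"
    and wpos: "\<And>i j. E i j \<Longrightarrow> w i j > 0"
    and conn: "\<And>i j. i < n \<Longrightarrow> j < n \<Longrightarrow> E\<^sup>*\<^sup>* i j"
    and cpos: "c > 0"
    and ex_star: "\<exists>V1 V2. is_star n E V1 V2 \<and> star_weight_defined w V1 V2 \<and> star_weight w V1 V2 = c"
  shows "eigenvalue (laplacian n E w) c \<and>
         order c (char_poly (laplacian n E w)) \<ge> stars_degree n E w c"
proof -
  define S where "S = stars_of_weight n E w c"
  define L where "L = laplacian n E w"
  define D where "D = (\<Union>(V1,V2)\<in>S. V1 - {Min V1})"
  define piv where "piv k = Min {i. i < n \<and> nbhd n E i = nbhd n E k}" for k
  have Lc: "L \<in> carrier_mat n n" unfolding L_def laplacian_def by simp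
  have Sfin: "finite S"
  proof (rule finite_subset)
    show "S \<subseteq> Pow {..<n} \<times> Pow {..<n}" unfolding S_def stars_of_weight_def is_star_def by auto
  qed auto
  have starS: "is_star n E V1 V2" "star_weight_defined w V1 V2" "star_weight w V1 V2 = c"
    if "(V1,V2) \<in> S" for V1 V2 using that unfolding S_def stars_of_weight_def by auto
  have V1fin: "finite V1" "V1 \<subseteq> {..<n}" "V2 \<subseteq> {..<n}" "card V1 \<ge> 2" if "(V1,V2) \<in> S" for V1 V2
    using star_sub[OF starS(1)[OF that]] by (auto intro: finite_subset)
  have V1eq: "{i. i < n \<and> nbhd n E i = nbhd n E k} = V1" if "(V1,V2) \<in> S" "k \<in> V1" for V1 V2 k
  proof -
    have "V1 = {i. i < n \<and> nbhd n E i = V2}" using starS(1)[OF that(1)] by (rule star_V1)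
    with that(2) show ?thesis by auto
  qed
  have pivV: "piv k = Min V1" if "(V1,V2) \<in> S" "k \<in> V1" for V1 V2 k
    unfolding piv_def V1eq[OF that] ..
  have disj: "\<forall>x\<in>S. \<forall>y\<in>S. x \<noteq> y \<longrightarrow> (case x of (V1,V2) \<Rightarrow> V1 - {Min V1}) \<inter> (case y of (V1,V2) \<Rightarrow> V1 - {Min V1}) = {}"
  proof (intro ballI impI)
    fix x y assume x: "x \<in> S" and y: "y \<in> S" and ne: "x \<noteq> y"
    obtain V1 V2 where xe: "x = (V1,V2)" by (cases x)
    obtain U1 U2 where ye: "y = (U1,U2)" by (cases y)
    have a: "V1 = {i. i < n \<and> nbhd n E i = V2}" using starS(1)[OF x[unfolded xe]] by (rule star_V1)
    have b: "U1 = {i. i < n \<and> nbhd n E i = U2}" using starS(1)[OF y[unfolded ye]] by (rule star_V1)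
    show "(case x of (V1,V2) \<Rightarrow> V1 - {Min V1}) \<inter> (case y of (V1,V2) \<Rightarrow> V1 - {Min V1}) = {}"
    proof (cases "V2 = U2")
      case True then show ?thesis using a b ne xe ye by auto
    next
      case False then show ?thesis using a b xe ye by auto
    qed
  qed
  have cardD: "card D = stars_degree n E w c"
  proof -
    have "card D = (\<Sum>x\<in>S. card (case x of (V1,V2) \<Rightarrow> V1 - {Min V1}))"
      unfolding D_def by (rule card_UN_disjoint[OF Sfin _ disj]) (auto dest: V1fin)
    also have "\<dots> = (\<Sum>(V1,V2)\<in>S. card V1 - 1)"
    proof (rule sum.cong[OF refl])
      fix x assume x: "x \<in> S"
      obtain V1 V2 where xe: "x = (V1,V2)" by (cases x)
      have "finite V1" "V1 \<noteq> {}" using V1fin[OF x[unfolded xe]] by auto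
      then show "card (case x of (V1,V2) \<Rightarrow> V1 - {Min V1}) = (case x of (V1,V2) \<Rightarrow> card V1 - 1)"
        using xe by simp
    qed
    finally show ?thesis unfolding stars_degree_def S_def .
  qed
  have DS: "D \<subseteq> {..<n}" unfolding D_def using V1fin(2) by fastforce
  have strength_c: "strength n E w k = c" if "(V1,V2) \<in> S" "k \<in> V1" for V1 V2 k
  proof -
    note st = starS(1)[OF that(1)]
    have V2n: "V2 \<subseteq> {..<n}" using star_sub[OF st] by simp
    have "strength n E w k = (\<Sum>j\<in>V2. adj_mat n E w k j)"
      unfolding strength_def
    proof (rule sum.mono_neutral_right)
      show "V2 \<subseteq> {..<n}" by (rule V2n)
      show "\<forall>j\<in>{..<n} - V2. adj_mat n E w k j = 0"
      proof
        fix j assume "j \<in> {..<n} - V2"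
        then have "\<not> E k j" using star_E2[OF st that(2)] by auto
        then show "adj_mat n E w k j = 0" unfolding adj_mat_def by simp
      qed
    qed auto
    also have "\<dots> = (\<Sum>j\<in>V2. w (SOME i. i \<in> V1) j)"
    proof (rule sum.cong[OF refl])
      fix j assume j: "j \<in> V2"
      have s: "(SOME i. i \<in> V1) \<in> V1" using that(2) by (rule someI)
      have "E k j" using star_E[OF st that(2) j] .
      then have "adj_mat n E w k j = w k j" unfolding adj_mat_def by simp
      also have "\<dots> = w (SOME i. i \<in> V1) j"
        using starS(2)[OF that(1)] that(2) s j unfolding star_weight_defined_def by blast
      finally show "adj_mat n E w k j = w (SOME i. i \<in> V1) j" .
    qed
    also have "\<dots> = c" using starS(3)[OF that(1)] unfolding star_weight_def .
    finally show ?thesis .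
  qed
  have adj_eq: "adj_mat n E w r k = adj_mat n E w r p" if "(V1,V2) \<in> S" "k \<in> V1" "p \<in> V1" for V1 V2 k p r
  proof -
    note st = starS(1)[OF that(1)]
    show ?thesis
    proof (cases "r \<in> V2")
      case True
      have ek: "E k r" and ep: "E p r" using star_E[OF st _ True] that by auto
      have "w r k = w k r" using wsym[OF sym[OF ek]] .
      also have "\<dots> = w p r" using starS(2)[OF that(1)] that(2,3) True unfolding star_weight_defined_def by blast
      also have "\<dots> = w r p" using wsym[OF ep] .
      finally show ?thesis using sym[OF ek] sym[OF ep] unfolding adj_mat_def by simp
    next
      case False
      have "\<not> E r k"
      proof
        assume "E r k"
        then have "E k r" "r < n" using sym verts by auto
        then show False using star_E2[OF st that(2)] False by auto
      qed
      moreover have "\<not> E r p"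
      proof
        assume "E r p"
        then have "E p r" "r < n" using sym verts by auto
        then show False using star_E2[OF st that(3)] False by auto
      qed
      ultimately show ?thesis unfolding adj_mat_def by simp
    qed
  qed
  have dvd: "[:-c,1:] ^ card D dvd char_poly L"
  proof (rule key_dvd[OF Lc DS])
    fix k assume "k \<in> D"
    then obtain V1 V2 where x: "(V1,V2) \<in> S" and k: "k \<in> V1" "k \<noteq> Min V1" unfolding D_def by auto
    have f: "finite V1" "V1 \<subseteq> {..<n}" using V1fin[OF x] by auto
    have pk: "piv k = Min V1" using pivV[OF x k(1)] .
    have mle: "Min V1 \<le> k" using f k by simp
    show "piv k < k" using pk mle k by simp
    fix r assume r: "r < n"
    have pV: "Min V1 \<in> V1" using f k by (intro Min_in) auto
    have kn: "k < n" and pn: "Min V1 < n" using f k pV by auto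
    have "L $$ (r,k) - L $$ (r, piv k) = (if r = k then strength n E w k else 0) - (if r = Min V1 then strength n E w (Min V1) else 0)"
      unfolding L_def laplacian_def pk using r kn pn adj_eq[OF x k(1) pV, of r] by simp
    then show "L $$ (r,k) - L $$ (r, piv k) = c * ((if r = k then 1 else 0) - (if r = piv k then 1 else 0))"
      using strength_c[OF x k(1)] strength_c[OF x pV] pk by simp
  qed
  have nz: "char_poly L \<noteq> 0" using degree_monic_char_poly[OF Lc] by auto
  have ord: "card D \<le> order c (char_poly L)" using dvd nz order_divides by blast
  obtain V1 V2 where x: "(V1,V2) \<in> S" using ex_star unfolding S_def stars_of_weight_def by auto
  have "V1 - {Min V1} \<noteq> {}"
  proof -
    have a: "card V1 \<ge> 2" "finite V1" using V1fin[OF x] by auto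
    then have "V1 \<noteq> {}" by auto
    then have "Min V1 \<in> V1" using a by simp
    then have "card (V1 - {Min V1}) = card V1 - 1" using a by simp
    then have "card (V1 - {Min V1}) \<noteq> 0" using a by simp
    then show ?thesis by (metis card.empty)
  qed
  then have "D \<noteq> {}" unfolding D_def using x by blast
  moreover have "finite D" using DS finite_subset by blast
  ultimately have "card D > 0" by auto
  then have "poly (char_poly L) c = 0" using ord order_root[of "char_poly L" c] by linarith
  then have "eigenvalue L c" using eigenvalue_root_char_poly[OF Lc] by simp
  then show ?thesis using ord cardD unfolding L_def by simp
qed

end
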